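(* Let $m \geq 4$ be an integer, let $p$ be a prime with $\gcd(p, m) = 1$, and let $n_0$ be a positive integer with $n_0 \equiv 1 \pmod{p}$. Then there are no polynomials $x(\lambda), y(\lambda), z(\lambda)$ with positive integer coefficients such that $$\frac{m}{n_0 + p\lambda} = \frac{1}{x(\lambda)} + \frac{1}{y(\lambda)} + \frac{1}{z(\lambda)}$$ holds identically in $\lambda$.
   Context: $\lambda$ is an indeterminate. *)

theory Defs
  imports "HOL-Computational_Algebra.Polynomial" "HOL-Computational_Algebra.Primes"
begin

text \<open>A polynomial with positive integer coefficients: a nonzero integer polynomial
all of whose (nonzero) coefficients are positive, i.e. all coefficients are nonnegative.\<close>
definition pos_int_coeff_poly :: "int poly \<Rightarrow> bool" where
  "pos_int_coeff_poly f \<longleftrightarrow> f \<noteq> 0 \<and> (\<forall>i. coeff f i \<ge> 0)"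

definition evalR :: "int poly \<Rightarrow> real \<Rightarrow> real" where
  "evalR f t = poly (map_poly of_int f) t"

end

theory Submission
  imports Defs
begin


definition nnp :: "int poly \<Rightarrow> bool" where
  "nnp f \<longleftrightarrow> (\<forall>i. coeff f i \<ge> 0)"

lemma nnp_add: "nnp f \<Longrightarrow> nnp g \<Longrightarrow> nnp (f + g)"
  by (simp add: nnp_def)

lemma nnp_mult: "nnp f \<Longrightarrow> nnp g \<Longrightarrow> nnp (f * g)"
  unfolding nnp_def coeff_mult by (auto intro!: sum_nonneg mult_nonneg_nonneg)

lemma nnp_lead: "nnp f \<Longrightarrow> f \<noteq> 0 \<Longrightarrow> lead_coeff f > 0"
  unfolding nnp_def by (metis leading_coeff_0_iff order_le_less)

lemma nnp_degree_add1:
  assumes "nnp f" "nnp g"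
  shows "degree g \<le> degree (f + g)"
proof (cases "g = 0")
  case True thus ?thesis by simp
next
  case False
  have "coeff (f+g) (degree g) = coeff f (degree g) + lead_coeff g" by simp
  moreover have "coeff f (degree g) \<ge> 0" using assms by (simp add: nnp_def)
  moreover have "lead_coeff g > 0" using nnp_lead assms False by blast
  ultimately have "coeff (f+g) (degree g) \<noteq> 0" by linarith
  thus ?thesis by (rule le_degree)
qed

lemma nnp_degree_add:
  assumes "nnp f" "nnp g"
  shows "degree (f + g) = max (degree f) (degree g)"
proof (rule antisym)
  show "degree (f + g) \<le> max (degree f) (degree g)"
    by (rule degree_add_le) auto
  have "degree g \<le> degree (f + g)" using assms by (rule nnp_degree_add1)
  moreover have "degree f \<le> degree (g + f)" using assms by (intro nnp_degree_add1)
  ultimately show "max (degree f) (degree g) \<le> degree (f + g)" by (simp add: add.commute)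
qed

lemma evalR_int: "evalR f (of_int k) = of_int (poly f k)"
  unfolding evalR_def by (induct f rule: pCons_induct) (simp_all add: map_poly_pCons)

lemma nnp_poly_nonneg: "nnp f \<Longrightarrow> (x::int) \<ge> 0 \<Longrightarrow> poly f x \<ge> 0"
  unfolding poly_altdef nnp_def by (auto intro!: sum_nonneg)

lemma deg1_form: "degree f = 1 \<Longrightarrow> f = [:coeff f 0, coeff f 1:]"
  apply (intro poly_eqI)
  subgoal for n
    by (cases n; cases "n - 1") (auto simp: coeff_pCons intro!: coeff_eq_0)
  done

lemma two_zero:
  fixes X Y Z M :: int
  assumes "M \<ge> 4" "M*X*Y*Z = X*Y + Y*Z + Z*X"
  shows "(X=0 \<and> Y=0) \<or> (Y=0 \<and> Z=0) \<or> (Z=0 \<and> X=0)"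
proof (rule ccontr)
  assume nt: "\<not> ?thesis"
  have nz: "X \<noteq> 0" "Y \<noteq> 0" "Z \<noteq> 0" using nt assms(2) by auto
  have za: "\<bar>X\<bar> \<ge> 1" "\<bar>Y\<bar> \<ge> 1" "\<bar>Z\<bar> \<ge> 1" using nz by arith+
  have a: "\<bar>X*Y\<bar> \<le> \<bar>X*Y*Z\<bar>"
  proof -
    have "\<bar>X*Y\<bar> * 1 \<le> \<bar>X*Y\<bar> * \<bar>Z\<bar>" using za by (intro mult_left_mono) auto
    thus ?thesis by (simp add: abs_mult)
  qed
  have b: "\<bar>Y*Z\<bar> \<le> \<bar>X*Y*Z\<bar>"
  proof -
    have "\<bar>Y*Z\<bar> * 1 \<le> \<bar>Y*Z\<bar> * \<bar>X\<bar>" using za by (intro mult_left_mono) auto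
    thus ?thesis by (simp add: abs_mult mult_ac)
  qed
  have c: "\<bar>Z*X\<bar> \<le> \<bar>X*Y*Z\<bar>"
  proof -
    have "\<bar>Z*X\<bar> * 1 \<le> \<bar>Z*X\<bar> * \<bar>Y\<bar>" using za by (intro mult_left_mono) auto
    thus ?thesis by (simp add: abs_mult mult_ac)
  qed
  have pos: "\<bar>X*Y*Z\<bar> > 0" using nz by simp
  have "\<bar>M*X*Y*Z\<bar> = M * \<bar>X*Y*Z\<bar>" using assms(1) by (simp add: abs_mult)
  also have "\<dots> \<ge> 4 * \<bar>X*Y*Z\<bar>" using assms(1) pos by (intro mult_right_mono) auto
  finally have "\<bar>M*X*Y*Z\<bar> \<ge> 4 * \<bar>X*Y*Z\<bar>" .
  moreover have "\<bar>X*Y + Y*Z + Z*X\<bar> \<le> \<bar>X*Y\<bar> + \<bar>Y*Z\<bar> + \<bar>Z*X\<bar>" by linarith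
  ultimately show False using a b c pos assms(2) by linarith
qed



lemma coeffU: "coeff (([:q, 1:]::int poly) * f) (Suc k) = q * coeff f (Suc k) + coeff f k"
proof -
  have "[:q, 1:] * f = smult q f + pCons 0 f" by (simp add: mult_pCons_left)
  thus ?thesis by (simp add: smult_one)
qed

lemma caseA:
  fixes a1 a2 q n0 p M :: int and z :: "int poly"
  assumes a1: "a1 > 0" and a2: "a2 > 0" and p: "p > 0" and q: "q \<ge> 0" and n0: "n0 = p*q+1"
    and z: "nnp z" "z \<noteq> 0"
    and id: "[:M:] * [:a1*q, a1:] * [:a2*q, a2:] * z
       = [:n0,p:] * ([:a1*q,a1:]*[:a2*q,a2:] + [:a2*q,a2:]*z + z*[:a1*q,a1:])"
  shows False
proof -
  define U where "U = [:q, 1:]"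
  define N where "N = [:n0, p:]"
  define E where "E = [:M:]*[:a1:]*[:a2:]*U - ([:a1:]+[:a2:])*N"
  have L1: "[:a1*q, a1:] = [:a1:] * U" and L2: "[:a2*q,a2:] = [:a2:] * U" by (simp_all add: U_def)
  have U0: "U \<noteq> 0" by (simp add: U_def)
  have "U * (z * E) - U * ([:a1:]*[:a2:]*N*U) = [:M:] * [:a1*q, a1:] * [:a2*q, a2:] * z
       - [:n0,p:] * ([:a1*q,a1:]*[:a2*q,a2:] + [:a2*q,a2:]*z + z*[:a1*q,a1:])"
    unfolding L1 L2 E_def N_def[symmetric] by (simp add: algebra_simps smult_add_left)
  with id have "U * (z * E) = U * ([:a1:]*[:a2:]*N*U)" by simp
  hence zE: "z * E = [:a1:]*[:a2:]*N*U" using mult_left_cancel[OF U0] by blast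
  have Eq: "poly E (-q) = -(a1+a2)" by (simp add: E_def U_def N_def n0 algebra_simps)
  have "poly (z*E) (-q) = 0" unfolding zE by (simp add: U_def)
  hence "poly z (-q) = 0" using Eq a1 a2 by simp
  hence "U dvd z" by (simp add: poly_eq_0_iff_dvd U_def)
  then obtain z1 where z1: "z = U * z1" by (auto elim: dvdE)
  from zE have "U * (z1 * E) = U * ([:a1:]*[:a2:]*N)" unfolding z1 by (simp add: mult_ac)
  hence z1E: "z1 * E = [:a1:]*[:a2:]*N" using mult_left_cancel[OF U0] by blast
  have z10: "z1 \<noteq> 0" using z z1 by auto
  define k where "k = M*a1*a2 - (a1+a2)*p"
  define e0 where "e0 = M*a1*a2*q - (a1+a2)*n0"
  have Ef: "E = [:e0, k:]" by (simp add: E_def U_def N_def e0_def k_def algebra_simps)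
  have e0k: "e0 = q*k - (a1+a2)" by (simp add: e0_def k_def n0 algebra_simps)
  show False
  proof (cases "k = 0")
    case False
    have dE: "degree E = 1" "E \<noteq> 0" using False by (simp_all add: Ef)
    have "degree (z1 * E) = degree z1 + degree E" using z10 dE(2) by (rule degree_mult_eq)
    hence "degree (z1 * E) = degree z1 + 1" using dE by simp
    moreover have "degree ([:a1:]*[:a2:]*N) = 1" using a1 a2 p by (simp add: N_def)
    ultimately have "degree z1 = 0" using z1E by simp
    then obtain c where c: "z1 = [:c:]" by (auto elim: degree_eq_zeroE)
    have c0: "c * e0 = a1*a2*n0" using arg_cong[OF z1E, of "\<lambda>f. coeff f 0"] by (simp add: c Ef N_def mult_ac)
    have c1: "c * k = a1*a2*p" using arg_cong[OF z1E, of "\<lambda>f. coeff f 1"] by (simp add: c Ef N_def mult_ac)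
    have "coeff z 1 = c" by (simp add: z1 c U_def)
    hence cnn: "c \<ge> 0" using z(1) unfolding nnp_def by metis
    have "c * e0 = q*(c*k) - c*(a1+a2)" by (simp add: e0k algebra_simps)
    hence "a1*a2*n0 = q*(a1*a2*p) - c*(a1+a2)" using c0 c1 by simp
    hence "a1*a2 = - c*(a1+a2)" by (simp add: n0 algebra_simps)
    moreover have "a1*a2 > 0" using a1 a2 by simp
    moreover have "c*(a1+a2) \<ge> 0" using cnn a1 a2 by simp
    ultimately show False by linarith
  next
    case True
    hence Ef2: "E = [:-(a1+a2):]" using Ef e0k by simp
    have c1: "coeff z1 1 * (-(a1+a2)) = a1*a2*p" using arg_cong[OF z1E, of "\<lambda>f. coeff f 1"] by (simp add: Ef2 N_def mult_ac)
    have c2: "coeff z1 2 * (-(a1+a2)) = 0" using arg_cong[OF z1E, of "\<lambda>f. coeff f 2"] by (simp add: Ef2 N_def numeral_2_eq_2 mult_ac)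
    hence c2': "coeff z1 2 = 0" using a1 a2 by simp
    have "coeff z 2 = coeff z1 1" unfolding z1 U_def numeral_2_eq_2 coeffU using c2' by (simp add: numeral_2_eq_2)
    hence "coeff z1 1 \<ge> 0" using z(1) unfolding nnp_def by metis
    hence "coeff z1 1 * (a1+a2) \<ge> 0" using a1 a2 by simp
    moreover have "a1*a2*p > 0" using a1 a2 p by simp
    ultimately show False using c1 by (simp add: algebra_simps)
  qed
qed



lemma caseB:
  fixes a1 a2 b2 q n0 p M :: int and z :: "int poly"
  assumes a1: "a1 > 0" and a2: "a2 > 0" and p: "prime p" and q: "q \<ge> 0" and n0: "n0 = p*q+1"
    and M: "M > 0"
    and z: "nnp z" "z \<noteq> 0" and zq: "poly z (-q) = 0" and l2: "b2 - a2*q \<noteq> 0"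
    and id: "[:M:] * [:a1*q, a1:] * [:b2, a2:] * z
       = [:n0,p:] * ([:a1*q,a1:]*[:b2,a2:] + [:b2,a2:]*z + z*[:a1*q,a1:])"
  shows False
proof -
  have p0: "p > 1" using p prime_gt_1_int by blast
  have pa1: "p*a1 > 0" "a1*p > 0" using p0 a1 by simp_all
  define U where "U = [:q, 1:]"
  define N where "N = [:n0, p:]"
  define L2 where "L2 = [:b2, a2:]"
  define D where "D = [:M:]*[:a1:]*L2*U - N*L2 - [:a1:]*N*U"
  have L1: "[:a1*q, a1:] = [:a1:] * U" by (simp add: U_def)
  have U0: "U \<noteq> 0" by (simp add: U_def)
  have "U dvd z" using zq by (simp add: poly_eq_0_iff_dvd U_def)
  then obtain z1 where z1: "z = U * z1" by (auto elim: dvdE)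
  have z10: "z1 \<noteq> 0" using z z1 by auto
  have "U * (z1 * D) - U * ([:a1:]*N*L2) = [:M:] * [:a1*q, a1:] * [:b2, a2:] * z
       - [:n0,p:] * ([:a1*q,a1:]*[:b2,a2:] + [:b2,a2:]*z + z*[:a1*q,a1:])"
    unfolding L1 z1 D_def N_def[symmetric] L2_def[symmetric] by (simp add: algebra_simps)
  with id have "U * (z1 * D) = U * ([:a1:]*N*L2)" by simp
  hence zD: "z1 * D = [:a1:]*N*L2" using mult_left_cancel[OF U0] by blast
  have Dq: "poly D (-q) = -(b2 - a2*q)" by (simp add: D_def U_def N_def L2_def n0 algebra_simps)
  have "poly (z1 * D) (-q) = a1 * (b2 - a2*q)" unfolding zD by (simp add: N_def L2_def n0 algebra_simps)
  hence "poly z1 (-q) * (-(b2 - a2*q)) = a1 * (b2 - a2*q)" using Dq by simp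
  hence "(b2 - a2*q) * (poly z1 (-q) + a1) = 0" by (simp add: algebra_simps)
  hence z1q: "poly z1 (-q) = -a1" using l2 by simp
  define d2 where "d2 = M*a1*a2 - p*a2 - a1*p"
  define d1 where "d1 = M*a1*(b2 + a2*q) - (n0*a2 + p*b2) - a1*(n0 + p*q)"
  define d0 where "d0 = M*a1*b2*q - n0*b2 - a1*n0*q"
  have Df: "D = [:d0, d1, d2:]"
    by (simp add: D_def U_def N_def L2_def d0_def d1_def d2_def algebra_simps)
  have Rf: "[:a1:]*N*L2 = [:a1*n0*b2, a1*(n0*a2 + p*b2), a1*p*a2:]"
    by (simp add: N_def L2_def algebra_simps)
  have zD': "z1 * D = [:a1*n0*b2, a1*(n0*a2 + p*b2), a1*p*a2:]" using zD Rf by simp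
  have R0: "[:a1:]*N*L2 \<noteq> 0" using a1 a2 p0 unfolding Rf by simp
  have dR: "degree ([:a1:]*N*L2) = 2" using a1 a2 p0 unfolding Rf by simp
  have coeffz2: "coeff z 2 = q * coeff z1 2 + coeff z1 1"
    unfolding z1 U_def numeral_2_eq_2 coeffU by simp
  have coeffz3: "coeff z 3 = q * coeff z1 3 + coeff z1 2"
    unfolding z1 U_def numeral_3_eq_3 numeral_2_eq_2 coeffU by simp
  show False
  proof (cases "d2 = 0")
    case False
    have dD: "degree D = 2" "D \<noteq> 0" using False by (simp_all add: Df)
    have "degree (z1 * D) = degree z1 + degree D" using z10 dD(2) by (rule degree_mult_eq)
    hence "degree z1 = 0" using zD dD dR by simp
    then obtain c where c: "z1 = [:c:]" by (auto elim: degree_eq_zeroE)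
    have "c = -a1" using z1q by (simp add: c)
    moreover have "coeff z 1 = c" by (simp add: z1 c U_def)
    moreover have "coeff z 1 \<ge> 0" using z(1) unfolding nnp_def by metis
    ultimately show False using a1 by simp
  next
    case d2: True
    show False
    proof (cases "d1 = 0")
      case False
      have dD: "degree D = 1" "D \<noteq> 0" using False d2 by (simp_all add: Df)
      have "degree (z1 * D) = degree z1 + degree D" using z10 dD(2) by (rule degree_mult_eq)
      hence "degree z1 = 1" using zD dD dR by simp
      hence z1f: "z1 = [:coeff z1 0, coeff z1 1:]" by (rule deg1_form)
      define e0 where "e0 = coeff z1 0"
      define e1 where "e1 = coeff z1 1"
      have z1f': "z1 = [:e0, e1:]" using z1f e0_def e1_def by simp
      have Df': "D = [:d0, d1:]" using Df d2 by simp
      have q0: "e0 * d0 = a1*n0*b2" using arg_cong[OF zD', of "\<lambda>f. coeff f 0"]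
        by (simp add: z1f' Df' Rf mult.commute)
      have q1: "e0 * d1 + e1 * d0 = a1*(n0*a2 + p*b2)" using arg_cong[OF zD', of "\<lambda>f. coeff f 1"]
        by (simp add: z1f' Df' Rf algebra_simps)
      have q2: "e1 * d1 = a1*p*a2" using arg_cong[OF zD', of "\<lambda>f. coeff f 2"]
        by (simp add: z1f' Df' Rf numeral_2_eq_2 algebra_simps)
      have "(p*e0 - n0*e1)*(p*d0 - n0*d1) = p*p*(e0*d0) - p*n0*(e0*d1 + e1*d0) + n0*n0*(e1*d1)"
        by (simp add: algebra_simps)
      also have "\<dots> = 0" unfolding q0 q1 q2 by (simp add: algebra_simps)
      finally have "p*e0 - n0*e1 = 0 \<or> p*d0 - n0*d1 = 0" by simp
      have cz2: "coeff z 2 = e1" using coeffz2 z1f' by (simp add: numeral_2_eq_2)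
      have e1nn: "e1 \<ge> 0" using z(1) cz2 unfolding nnp_def by metis
      have z1q': "e0 - q*e1 = -a1" using z1q z1f' by (simp add: algebra_simps)
      show False
      proof (cases "p*e0 - n0*e1 = 0")
        case True
        have "e1 = p*(e0 - q*e1)" using True n0 by (simp add: algebra_simps)
        hence "e1 = -(p*a1)" using z1q' by simp
        thus False using e1nn pa1 by linarith
      next
        case False
        with \<open>p*e0 - n0*e1 = 0 \<or> p*d0 - n0*d1 = 0\<close> have pd: "p*d0 - n0*d1 = 0" by simp
        have "p*p*d0 - p*n0*d1 + n0*n0*d2 = -(M*a1*(p*b2 - a2*n0))"
          by (simp add: d0_def d1_def d2_def n0 algebra_simps)
        also have "p*p*d0 - p*n0*d1 + n0*n0*d2 = p*(p*d0 - n0*d1)" using d2 by (simp add: algebra_simps)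
        finally have "M*a1*(p*b2 - a2*n0) = 0" using pd by simp
        hence pb2: "p*b2 = a2*n0" using M a1 by simp
        have "\<not> p dvd n0"
        proof
          assume "p dvd n0"
          hence "p dvd 1" using n0 by (simp add: dvd_add_right_iff)
          thus False using p0 by simp
        qed
        moreover have "p dvd a2*n0" using pb2 by (metis dvd_triv_left)
        ultimately have "p dvd a2" using p by (simp add: prime_dvd_mult_iff)
        then obtain k where k: "a2 = p*k" by (auto elim: dvdE)
        have k0: "k > 0" using a2 p0 k by (simp add: zero_less_mult_iff)
        have b2: "b2 = k*n0" using pb2 k p0 by (simp add: algebra_simps)
        have "p*(M*a1*k - p*k - a1) = 0" using d2 unfolding d2_def k by (simp add: algebra_simps)
        hence Mk: "M*a1*k = p*k + a1" using p0 by simp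
        have "d1 = (M*a1*k)*(n0 + p*q) - 2*p*k*n0 - a1*(n0 + p*q)"
          unfolding d1_def b2 k by (simp add: algebra_simps)
        also have "\<dots> = -(p*k)" unfolding Mk n0 by (simp add: algebra_simps)
        finally have "d1 = -(p*k)" .
        with q2 have "e1 * (-(p*k)) = a1*p*(p*k)" using k by simp
        hence "(p*k) * (e1 + a1*p) = 0" by (simp add: algebra_simps)
        hence "e1 = -(a1*p)" using p0 k0 by simp
        thus False using e1nn pa1 by linarith
      qed
    next
      case d1: True
      have Df': "D = [:d0:]" using Df d1 d2 by simp
      have d0q: "d0 = -(b2 - a2*q)" using Dq Df' by simp
      have c3: "coeff z1 3 * d0 = 0" using arg_cong[OF zD', of "\<lambda>f. coeff f 3"]
        by (simp add: Df' Rf numeral_3_eq_3 numeral_2_eq_2 disj_commute)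
      have c2: "coeff z1 2 * d0 = a1*p*a2" using arg_cong[OF zD', of "\<lambda>f. coeff f 2"]
        by (simp add: Df' Rf numeral_2_eq_2 mult.commute)
      have pos: "a1*p*a2 > 0" using a1 a2 p0 by simp
      hence "d0 \<noteq> 0" using c2 by auto
      hence "coeff z1 3 = 0" using c3 by simp
      hence "coeff z 3 = coeff z1 2" using coeffz3 by simp
      hence cz: "coeff z1 2 \<ge> 0" using z(1) unfolding nnp_def by metis
      have d0pos: "d0 > 0"
      proof (rule ccontr)
        assume "\<not> d0 > 0"
        hence "coeff z1 2 * d0 \<le> 0" using cz by (simp add: mult_nonneg_nonpos)
        thus False using c2 pos by simp
      qed
      define l where "l = b2 - a2*q"
      have lneg: "l < 0" using d0pos d0q l_def by simp
      have "(M*a1 - p)*a2 = p*a1" using d2 unfolding d2_def by (simp add: algebra_simps)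
      hence "(M*a1 - p)*a2 > 0" using a1 p0 by simp
      hence Mp: "M*a1 - p > 0" using a2 by (simp add: zero_less_mult_iff)
      have "d1 = l*(M*a1 - p) + 2*q*d2 - a1 - a2"
        unfolding d1_def d2_def l_def n0 by (simp add: algebra_simps)
      hence "l*(M*a1 - p) = a1 + a2" using d1 d2 by simp
      moreover have "l*(M*a1 - p) < 0" using lneg Mp by (simp add: mult_neg_pos)
      ultimately show False using a1 a2 by simp
    qed
  qed
qed



lemma perm_swap:
  fixes a n x y z :: "'a::comm_ring"
  shows "a*x*y*z = n*(x*y+y*z+z*x) \<Longrightarrow> a*y*x*z = n*(y*x+x*z+z*y)"
  by (simp add: ac_simps)

lemma perm_xzy:
  fixes a n x y z :: "'a::comm_ring"
  shows "a*x*y*z = n*(x*y+y*z+z*x) \<Longrightarrow> a*x*z*y = n*(x*z+z*y+y*x)"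
  by (simp add: ac_simps)

lemma ring_T:
  fixes a n x y z :: "'a::comm_ring"
  shows "a*x*y*z = n*(x*y+y*z+z*x) \<Longrightarrow> (a*x - n)*y*z = n*x*(y+z)"
  by (simp add: algebra_simps)

lemma final:
  fixes L1 L2 z :: "int poly" and M n0 p q :: int
  assumes n1: "nnp L1" and n2: "nnp L2" and z: "nnp z" "z \<noteq> 0"
    and d1: "degree L1 = 1" and d2: "degree L2 = 1"
    and M: "M \<ge> 4" and p: "prime p" and q: "q \<ge> 0" and n0: "n0 = p*q+1"
    and id: "[:M:]*L1*L2*z = [:n0,p:]*(L1*L2 + L2*z + z*L1)"
  shows False
proof -
  have p0: "p > 0" using prime_gt_1_int[OF p] by simp
  define a1 where "a1 = coeff L1 1"
  define b1 where "b1 = coeff L1 0"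
  define a2 where "a2 = coeff L2 1"
  define b2 where "b2 = coeff L2 0"
  have L1f: "L1 = [:b1, a1:]" unfolding a1_def b1_def by (rule deg1_form[OF d1])
  have L2f: "L2 = [:b2, a2:]" unfolding a2_def b2_def by (rule deg1_form[OF d2])
  have L10: "L1 \<noteq> 0" and L20: "L2 \<noteq> 0" using d1 d2 by auto
  have "lead_coeff L1 > 0" by (rule nnp_lead[OF n1 L10])
  hence a1: "a1 > 0" using d1 a1_def by simp
  have "lead_coeff L2 > 0" by (rule nnp_lead[OF n2 L20])
  hence a2: "a2 > 0" using d2 a2_def by simp
  have N1: "poly [:n0,p:] (-q) = 1" by (simp add: n0)
  have PM: "poly [:M:] (-q) = M" by simp
  have "poly ([:M:]*L1*L2*z) (-q) = poly ([:n0,p:]*(L1*L2 + L2*z + z*L1)) (-q)" using id by (rule arg_cong)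
  hence "M * poly L1 (-q) * poly L2 (-q) * poly z (-q)
     = poly L1 (-q) * poly L2 (-q) + poly L2 (-q) * poly z (-q) + poly z (-q) * poly L1 (-q)"
    by (simp only: poly_mult poly_add N1 PM mult_1)
  hence tz: "(poly L1 (-q) = 0 \<and> poly L2 (-q) = 0) \<or> (poly L2 (-q) = 0 \<and> poly z (-q) = 0)
      \<or> (poly z (-q) = 0 \<and> poly L1 (-q) = 0)" by (rule two_zero[OF M])
  have l1: "poly L1 (-q) = b1 - a1*q" and l2: "poly L2 (-q) = b2 - a2*q" by (simp_all add: L1f L2f)
  have caseA': False if "b1 = a1*q" "b2 = a2*q"
  proof -
    have e: "L1 = [:a1*q, a1:]" "L2 = [:a2*q, a2:]" using that L1f L2f by simp_all
    have id': "[:M:] * [:a1*q, a1:] * [:a2*q, a2:] * z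
       = [:n0,p:] * ([:a1*q,a1:]*[:a2*q,a2:] + [:a2*q,a2:]*z + z*[:a1*q,a1:])"
      using id unfolding e .
    show False by (rule caseA[OF a1 a2 p0 q n0 z id'])
  qed
  show False
  proof (cases "b1 = a1*q \<and> b2 = a2*q")
    case True thus False using caseA' by blast
  next
    case False
    show False
    proof (cases "b1 = a1*q")
      case True
      have l2n: "b2 - a2*q \<noteq> 0" using False True by simp
      have zq: "poly z (-q) = 0" using tz True False l1 l2 by auto
      have e: "L1 = [:a1*q, a1:]" using True L1f by simp
      have Mp: "M > 0" using M by simp
      have id': "[:M:] * [:a1*q, a1:] * [:b2, a2:] * z
       = [:n0,p:] * ([:a1*q,a1:]*[:b2,a2:] + [:b2,a2:]*z + z*[:a1*q,a1:])"
        using id unfolding e L2f .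
      show False by (rule caseB[OF a1 a2 p q n0 Mp z zq l2n id'])
    next
      case b1: False
      have e: "L2 = [:a2*q, a2:]" using tz l1 l2 b1 L2f by auto
      have zq: "poly z (-q) = 0" using tz b1 l1 l2 by auto
      have l1n: "b1 - a1*q \<noteq> 0" using b1 by simp
      have Mp: "M > 0" using M by simp
      have "[:M:]*L2*L1*z = [:n0,p:]*(L2*L1 + L1*z + z*L2)"
        using perm_swap[OF id] .
      hence id': "[:M:] * [:a2*q, a2:] * [:b1, a1:] * z
       = [:n0,p:] * ([:a2*q,a2:]*[:b1,a1:] + [:b1,a1:]*z + z*[:a2*q,a2:])"
        unfolding e L1f .
      show False by (rule caseB[OF a2 a1 p q n0 Mp z zq l1n id'])
    qed
  qed
qed

lemma second:
  fixes x y z :: "int poly" and M n0 p :: int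
  assumes nx: "nnp x" and ny: "nnp y" and nz: "nnp z" and x0: "x \<noteq> 0" and y0: "y \<noteq> 0" and z0: "z \<noteq> 0"
    and dx: "degree x = 1" and noeq: "\<forall>a. M*a \<noteq> p"
    and id: "[:M:]*x*y*z = [:n0,p:]*(x*y + y*z + z*x)"
  shows "degree y = 1 \<or> degree z = 1"
proof -
  have xf: "x = [:coeff x 0, coeff x 1:]" by (rule deg1_form[OF dx])
  define T where "T = [:M:]*x - [:n0,p:]"
  have Tf: "T = [:M*coeff x 0 - n0, M*coeff x 1 - p:]" unfolding T_def by (subst xf) simp
  have "M*coeff x 1 - p \<noteq> 0" using noeq by simp
  hence T1: "degree T = 1" "T \<noteq> 0" unfolding Tf by simp_all
  have p0: "p \<noteq> 0" using noeq by (metis mult_zero_right)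
  have eq: "T*y*z = [:n0,p:]*x*(y+z)" unfolding T_def by (rule ring_T[OF id])
  have TY: "T*y \<noteq> 0" using T1 y0 by simp
  have "degree (T*y*z) = degree T + degree y + degree z"
    using T1 y0 z0 TY by (simp add: degree_mult_eq)
  hence l: "degree (T*y*z) = 1 + degree y + degree z" using T1 by simp
  have "T*y*z \<noteq> 0" using TY z0 by simp
  hence yz: "y + z \<noteq> 0" using eq by auto
  have N0: "[:n0,p:] \<noteq> 0" "degree [:n0,p:] = 1" using p0 by simp_all
  have Nx: "[:n0,p:]*x \<noteq> 0" using N0(1) x0 mult_eq_0_iff by blast
  have "degree ([:n0,p:]*x*(y+z)) = degree [:n0,p:] + degree x + degree (y+z)"
    using degree_mult_eq[OF Nx yz] degree_mult_eq[OF N0(1) x0] by simp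
  hence "degree ([:n0,p:]*x*(y+z)) = 2 + max (degree y) (degree z)"
    using N0 dx nnp_degree_add[OF ny nz] by simp
  moreover have "degree (T*y*z) = degree ([:n0,p:]*x*(y+z))" using eq by (rule arg_cong)
  ultimately have "1 + degree y + degree z = 2 + max (degree y) (degree z)" using l by linarith
  thus ?thesis by (auto simp: max_def split: if_splits)
qed

lemma first:
  fixes x y z :: "int poly" and M n0 p :: int
  assumes nx: "nnp x" and ny: "nnp y" and nz: "nnp z" and x0: "x \<noteq> 0" and y0: "y \<noteq> 0" and z0: "z \<noteq> 0"
    and M0: "M \<noteq> 0" and p0: "p \<noteq> 0"
    and id: "[:M:]*x*y*z = [:n0,p:]*(x*y + y*z + z*x)"
  shows "degree x = 1 \<or> degree y = 1 \<or> degree z = 1"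
proof -
  have A: "[:M:]*x \<noteq> 0" "[:M:]*x*y \<noteq> 0" "[:M:]*x*y*z \<noteq> 0" using M0 x0 y0 z0 by simp_all
  have "degree ([:M:]*x*y*z) = degree x + degree y + degree z"
    using A M0 x0 y0 z0 by (simp add: degree_mult_eq)
  moreover have S0: "x*y + y*z + z*x \<noteq> 0" using A(3) id by auto
  have N0: "[:n0,p:] \<noteq> 0" "degree [:n0,p:] = 1" using p0 by simp_all
  have "degree (x*y + y*z + z*x) = max (max (degree (x*y)) (degree (y*z))) (degree (z*x))"
    using nnp_degree_add[OF nnp_add[OF nnp_mult[OF nx ny] nnp_mult[OF ny nz]] nnp_mult[OF nz nx]]
      nnp_degree_add[OF nnp_mult[OF nx ny] nnp_mult[OF ny nz]] by simp
  hence "degree (x*y + y*z + z*x) = max (max (degree x + degree y) (degree y + degree z)) (degree z + degree x)"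
    using x0 y0 z0 by (simp add: degree_mult_eq)
  hence "degree ([:n0,p:]*(x*y + y*z + z*x)) = 1 + max (max (degree x + degree y) (degree y + degree z)) (degree z + degree x)"
    using N0 degree_mult_eq[OF N0(1) S0] by simp
  moreover have "degree ([:M:]*x*y*z) = degree ([:n0,p:]*(x*y + y*z + z*x))" using id by (rule arg_cong)
  ultimately have "degree x + degree y + degree z = 1 + max (max (degree x + degree y) (degree y + degree z)) (degree z + degree x)"
    by linarith
  thus ?thesis by (auto simp: max_def split: if_splits)
qed

lemma reduce:
  fixes x y z :: "int poly" and M n0 p q :: int
  assumes nx: "nnp x" and ny: "nnp y" and nz: "nnp z" and x0: "x \<noteq> 0" and y0: "y \<noteq> 0" and z0: "z \<noteq> 0"
    and dx: "degree x = 1" and noeq: "\<forall>a. M*a \<noteq> p"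
    and M: "M \<ge> 4" and p: "prime p" and q: "q \<ge> 0" and n0: "n0 = p*q+1"
    and id: "[:M:]*x*y*z = [:n0,p:]*(x*y + y*z + z*x)"
  shows False
proof -
  from second[OF nx ny nz x0 y0 z0 dx noeq id] show False
  proof
    assume "degree y = 1"
    thus False using final[OF nx ny nz z0 dx _ M p q n0 id] by simp
  next
    assume dz: "degree z = 1"
    have "[:M:]*x*z*y = [:n0,p:]*(x*z + z*y + y*x)" by (rule perm_xzy[OF id])
    thus False using final[OF nx nz ny y0 dx dz M p q n0] by simp
  qed
qed


lemma polyid:
  fixes x y z :: "int poly" and m p n0 :: nat
  assumes x0: "x \<noteq> 0" and y0: "y \<noteq> 0" and z0: "z \<noteq> 0" and p0: "p > 0"
    and H: "\<forall>t::real. real n0 + real p * t \<noteq> 0 \<and> evalR x t \<noteq> 0 \<and> evalR y t \<noteq> 0 \<and> evalR z t \<noteq> 0 \<longrightarrow>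
               real m / (real n0 + real p * t) = 1 / evalR x t + 1 / evalR y t + 1 / evalR z t"
  shows "[:int m:]*x*y*z = [:int n0, int p:]*(x*y+y*z+z*x)"
proof -
  define N where "N = [:int n0, int p:]"
  define Q where "Q = [:int m:]*x*y*z - N*(x*y+y*z+z*x)"
  have key: "poly Q k = 0" if k: "poly N k \<noteq> 0" "poly x k \<noteq> 0" "poly y k \<noteq> 0" "poly z k \<noteq> 0" for k
  proof -
    define X where "X = poly x k"
    define Y where "Y = poly y k"
    define Z where "Z = poly z k"
    define NN where "NN = poly N k"
    have nr: "real n0 + real p * of_int k = of_int NN" by (simp add: N_def NN_def)
    have ex: "evalR x (of_int k) = of_int X" "evalR y (of_int k) = of_int Y" "evalR z (of_int k) = of_int Z"
      by (simp_all add: evalR_int X_def Y_def Z_def)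
    have nz: "(of_int NN :: real) \<noteq> 0" "(of_int X :: real) \<noteq> 0" "(of_int Y :: real) \<noteq> 0" "(of_int Z :: real) \<noteq> 0"
      using k by (simp_all add: NN_def X_def Y_def Z_def)
    have "real m / (of_int NN) = 1 / of_int X + 1 / of_int Y + 1 / of_int Z"
      using H[rule_format, of "of_int k"] nr ex nz by simp
    hence "real m * of_int X * of_int Y * of_int Z
        = of_int NN * (of_int X * of_int Y + of_int Y * of_int Z + of_int Z * of_int X)"
      using nz by (simp add: field_simps)
    hence "(of_int (int m * X * Y * Z) :: real) = of_int (NN * (X*Y + Y*Z + Z*X))" by simp
    hence "int m * X * Y * Z = NN * (X*Y + Y*Z + Z*X)" by (simp only: of_int_eq_iff)
    thus ?thesis by (simp add: Q_def X_def Y_def Z_def NN_def)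
  qed
  show ?thesis
  proof (rule ccontr)
    assume "\<not> ?thesis"
    hence Q0: "Q \<noteq> 0" by (simp add: Q_def N_def)
    have N0: "N \<noteq> 0" using p0 by (simp add: N_def)
    have fin: "finite ({k. poly Q k = 0} \<union> {k. poly N k = 0} \<union> {k. poly x k = 0} \<union> {k. poly y k = 0} \<union> {k. poly z k = 0})"
      using poly_roots_finite[OF Q0] poly_roots_finite[OF N0] poly_roots_finite[OF x0]
        poly_roots_finite[OF y0] poly_roots_finite[OF z0] by simp
    moreover have "({k. poly Q k = 0} \<union> {k. poly N k = 0} \<union> {k. poly x k = 0} \<union> {k. poly y k = 0} \<union> {k. poly z k = 0}) = (UNIV :: int set)"
      using key by blast
    ultimately show False using infinite_UNIV_int by simp
  qed
qed

theorem corollary4: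
  fixes m p n0 :: nat
  assumes "m \<ge> 4" and "prime p" and "gcd p m = 1"
    and "n0 > 0" and "n0 mod p = 1 mod p"
  shows "\<not> (\<exists>x y z. pos_int_coeff_poly x \<and> pos_int_coeff_poly y \<and> pos_int_coeff_poly z \<and>
            (\<forall>t::real. real n0 + real p * t \<noteq> 0 \<and> evalR x t \<noteq> 0 \<and> evalR y t \<noteq> 0 \<and> evalR z t \<noteq> 0 \<longrightarrow>
               real m / (real n0 + real p * t) = 1 / evalR x t + 1 / evalR y t + 1 / evalR z t))"
proof
  assume "\<exists>x y z. pos_int_coeff_poly x \<and> pos_int_coeff_poly y \<and> pos_int_coeff_poly z \<and>
            (\<forall>t::real. real n0 + real p * t \<noteq> 0 \<and> evalR x t \<noteq> 0 \<and> evalR y t \<noteq> 0 \<and> evalR z t \<noteq> 0 \<longrightarrow>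
               real m / (real n0 + real p * t) = 1 / evalR x t + 1 / evalR y t + 1 / evalR z t)"
  then obtain x y z where px: "pos_int_coeff_poly x" and py: "pos_int_coeff_poly y" and pz: "pos_int_coeff_poly z"
    and H: "\<forall>t::real. real n0 + real p * t \<noteq> 0 \<and> evalR x t \<noteq> 0 \<and> evalR y t \<noteq> 0 \<and> evalR z t \<noteq> 0 \<longrightarrow>
               real m / (real n0 + real p * t) = 1 / evalR x t + 1 / evalR y t + 1 / evalR z t"
    by blast
  have nx: "nnp x" and x0: "x \<noteq> 0" using px by (simp_all add: pos_int_coeff_poly_def nnp_def)
  have ny: "nnp y" and y0: "y \<noteq> 0" using py by (simp_all add: pos_int_coeff_poly_def nnp_def)
  have nz: "nnp z" and z0: "z \<noteq> 0" using pz by (simp_all add: pos_int_coeff_poly_def nnp_def)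
  have p1: "p > 1" using prime_gt_1_nat[OF assms(2)] .
  have id: "[:int m:]*x*y*z = [:int n0, int p:]*(x*y+y*z+z*x)"
    using polyid[OF x0 y0 z0 _ H] p1 by simp
  define q where "q = n0 div p"
  have "n0 mod p = 1" using assms(5) p1 by simp
  hence "n0 = p*q + 1" using div_mult_mod_eq[of n0 p] unfolding q_def by (simp add: mult.commute)
  hence n0i: "int n0 = int p * int q + 1" by simp
  have q0: "int q \<ge> 0" by simp
  have pr: "prime (int p)" using assms(2) by (simp add: prime_nat_int_transfer)
  have M4: "int m \<ge> 4" using assms(1) by simp
  have M0: "int m \<noteq> 0" and P0: "int p \<noteq> 0" using assms(1) p1 by simp_all
  have noeq: "\<forall>a. int m * a \<noteq> int p"
  proof
    fix a show "int m * a \<noteq> int p"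
    proof
      assume "int m * a = int p"
      hence "int m dvd int p" by (metis dvd_triv_left)
      hence "m dvd p" by (simp only: int_dvd_int_iff)
      hence "m = 1 \<or> m = p" using assms(2) prime_nat_iff by blast
      thus False using assms(1) assms(3) p1 by auto
    qed
  qed
  from first[OF nx ny nz x0 y0 z0 M0 P0 id] show False
  proof (elim disjE)
    assume "degree x = 1"
    thus False by (rule reduce[OF nx ny nz x0 y0 z0 _ noeq M4 pr q0 n0i id])
  next
    assume dy: "degree y = 1"
    show False by (rule reduce[OF ny nx nz y0 x0 z0 dy noeq M4 pr q0 n0i perm_swap[OF id]])
  next
    assume dz: "degree z = 1"
    show False by (rule reduce[OF nz nx ny z0 x0 y0 dz noeq M4 pr q0 n0i perm_swap[OF perm_xzy[OF id]]])
  qed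
qed

end
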